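(* Let $H=\mathbb{R}^N$ with the Euclidean inner product $(\cdot,\cdot)$. Let $B$ be a symmetric positive definite $N\times N$ matrix, and let $A = A_1 + A_2$ where $A_1, A_2$ are symmetric positive semidefinite $N\times N$ matrices. For a symmetric positive definite matrix $D$ write $\|z\|_D = (Dz,z)^{1/2}$. Let $\sigma \ge 1/2$ and $\tau>0$ be arbitrary, and let $(\varphi^n)_{n\ge 0}\subset \mathbb{R}^N$ be given. Suppose $(y^n)_{n\ge 0}\subset\mathbb{R}^N$ satisfies the factorized scheme \[ (B + \sigma \tau A_1)\, B^{-1}\, (B + \sigma \tau A_2)\, \frac{y^{n+1} - y^{n}}{\tau} + A y^{n} = \varphi^n, \qquad n = 0,1,2,\dots \] Then the scheme is unconditionally stable (i.e., stable for every $\tau>0$), and for every $n\ge 0$, \[ \|(B + \sigma \tau A_2)\, y^{n+1}\|_{B^{-1}} \le \|(B + \sigma \tau A_2)\, y^{n}\|_{B^{-1}} + \tau \|\varphi^n\|_{B^{-1}}. \]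
   Context: This scheme arises as a two-subdomain domain decomposition (regionally additive) time discretization of $B\,\frac{dy}{dt} + Ay = \varphi(t)$, where $B$ is a finite element mass matrix, $A$ the stiffness matrix, and $A_\alpha$ ($\alpha=1,2$) are the stiffness contributions weighted by a partition of unity $\eta_1+\eta_2=1$ subordinate to overlapping subdomains. $\tau$ is the time step and $\sigma$ a weight parameter ($\sigma=1/2$: Peaceman–Rachford type; $\sigma=1$: Douglas–Rachford type). *)

theory Defs
  imports "HOL-Analysis.Analysis"
begin

definition sym_mat :: "real^'n^'n \<Rightarrow> bool" where
  "sym_mat M \<longleftrightarrow> transpose M = M"

definition pos_def_mat :: "real^'n^'n \<Rightarrow> bool" where
  "pos_def_mat M \<longleftrightarrow> sym_mat M \<and> (\<forall>x. x \<noteq> 0 \<longrightarrow> (M *v x) \<bullet> x > 0)"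

definition pos_semidef_mat :: "real^'n^'n \<Rightarrow> bool" where
  "pos_semidef_mat M \<longleftrightarrow> sym_mat M \<and> (\<forall>x. (M *v x) \<bullet> x \<ge> 0)"

definition dnorm :: "real^'n^'n \<Rightarrow> real^'n \<Rightarrow> real" where
  "dnorm D z = sqrt ((D *v z) \<bullet> z)"

end

theory Submission imports Defs begin

lemma sym_dot: "sym_mat M \<Longrightarrow> (M *v x) \<bullet> y = x \<bullet> (M *v y)"
  unfolding sym_mat_def
  by (metis dot_lmul_matrix transpose_matrix_vector)

lemma pd_right_inv:
  fixes M :: "real^'n^'n"
  assumes "pos_def_mat M" shows "M ** matrix_inv M = mat 1" "matrix_inv M ** M = mat 1"
proof -
  have "\<forall>x. M *v x = 0 \<longrightarrow> x = 0"
    using assms unfolding pos_def_mat_def by (metis inner_zero_left less_irrefl)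
  then have "invertible M"
    using matrix_left_invertible_ker invertible_left_inverse by blast
  then have "\<exists>A'. M ** A' = mat 1 \<and> A' ** M = mat 1" unfolding invertible_def .
  then have "M ** matrix_inv M = mat 1 \<and> matrix_inv M ** M = mat 1"
    unfolding matrix_inv_def by (rule someI_ex)
  then show "M ** matrix_inv M = mat 1" "matrix_inv M ** M = mat 1" by auto
qed

lemma pd_surj:
  fixes M :: "real^'n^'n"
  assumes "pos_def_mat M" shows "\<exists>x. M *v x = u"
  using pd_right_inv(1)[OF assms]
  by (metis matrix_vector_mul_assoc matrix_vector_mul_lid)

lemma inv_pd:
  fixes B :: "real^'n^'n"
  assumes B: "pos_def_mat B"
  shows "pos_def_mat (matrix_inv B)"
proof -
  let ?G = "matrix_inv B"
  have BG: "B ** ?G = mat 1" and GB: "?G ** B = mat 1" using pd_right_inv[OF B] by auto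
  have tB: "transpose B = B" using B unfolding pos_def_mat_def sym_mat_def by auto
  have "transpose ?G ** B = mat 1"
    by (metis BG matrix_transpose_mul tB transpose_mat)
  then have "transpose ?G = ?G"
    by (metis BG matrix_mul_assoc matrix_mul_lid matrix_mul_rid)
  moreover have "(?G *v x) \<bullet> x > 0" if "x \<noteq> 0" for x
  proof -
    have x: "x = B *v (?G *v x)" by (simp add: matrix_vector_mul_assoc BG)
    then have "?G *v x \<noteq> 0" using that by (metis matrix_vector_mult_0_right)
    then have "(B *v (?G *v x)) \<bullet> (?G *v x) > 0" using B unfolding pos_def_mat_def by blast
    then show ?thesis using x by (simp add: inner_commute)
  qed
  ultimately show ?thesis unfolding pos_def_mat_def sym_mat_def by auto
qed

lemma transpose_add: "transpose (A + B) = transpose A + (transpose B :: real^'n^'m)"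
  by (simp add: transpose_def vec_eq_iff)

lemma pd_add:
  fixes B A :: "real^'n^'n"
  assumes "pos_def_mat B" "pos_semidef_mat A" "c \<ge> 0"
  shows "pos_def_mat (B + c *\<^sub>R A)"
  using assms unfolding pos_def_mat_def pos_semidef_mat_def sym_mat_def
  by (auto simp: transpose_add transpose_scalar algebra_simps matrix_vector_mult_add_rdistrib
      scaleR_matrix_vector_assoc[symmetric] inner_add_left
      intro!: add_pos_nonneg mult_nonneg_nonneg)

lemma tri:
  fixes G :: "real^'n^'n"
  assumes G: "pos_def_mat G"
  shows "dnorm G (x + y) \<le> dnorm G x + dnorm G y"
proof -
  define g where "g a b = (G *v a) \<bullet> b" for a b
  have sym: "g a b = g b a" for a b unfolding g_def using G sym_dot[of G a b]
    by (simp add: pos_def_mat_def inner_commute)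
  have nn: "g a a \<ge> 0" for a unfolding g_def using G unfolding pos_def_mat_def
    by (metis inner_zero_left less_eq_real_def matrix_vector_mult_0_right)
  have exp: "g (a + t *\<^sub>R b) (a + t *\<^sub>R b) = g a a + 2 * t * g a b + t^2 * g b b" for a b t
    unfolding g_def using sym[of a b] unfolding g_def
    by (simp add: algebra_simps inner_add_left inner_add_right power2_eq_square)
  have cs: "g x y ^ 2 \<le> g x x * g y y"
  proof (cases "y = 0")
    case True then show ?thesis by (simp add: g_def)
  next
    case False
    then have pos: "g y y > 0" using G unfolding g_def pos_def_mat_def by auto
    define t where "t = - g x y / g y y"
    have "0 \<le> g x x + 2 * t * g x y + t^2 * g y y" using nn exp by metis
    also have "\<dots> = g x x - g x y ^ 2 / g y y" using pos unfolding t_def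
      by (simp add: field_simps power2_eq_square)
    finally show ?thesis using pos by (simp add: field_simps)
  qed
  have "g x y \<le> sqrt (g x x) * sqrt (g y y)"
    by (metis cs real_le_rsqrt real_sqrt_mult abs_ge_self order.trans real_sqrt_abs) 
  then have "g (x+y) (x+y) \<le> (sqrt (g x x) + sqrt (g y y))^2"
    using exp[of x 1 y] nn[of x] nn[of y] by (simp add: power2_sum)
  then have "sqrt (g (x+y) (x+y)) \<le> sqrt (g x x) + sqrt (g y y)"
    using nn[of x] nn[of y] by (simp add: real_le_lsqrt)
  then show ?thesis unfolding dnorm_def g_def .
qed

lemma gexp:
  fixes G :: "real^'n^'n"
  assumes "sym_mat G"
  shows "(G *v (a + c *\<^sub>R b)) \<bullet> (a + c *\<^sub>R b) = (G *v a) \<bullet> a + 2 * c * ((G *v a) \<bullet> b) + c^2 * ((G *v b) \<bullet> b)"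
  using sym_dot[OF assms, of a b]
  by (simp add: algebra_simps inner_add_left inner_add_right power2_eq_square inner_commute)

theorem mainTheorem1:
  fixes B A1 A2 :: "real^'n^'n"
    and y phi :: "nat \<Rightarrow> real^'n"
    and \<sigma> \<tau> :: real
  assumes "pos_def_mat B"
    and "pos_semidef_mat A1" and "pos_semidef_mat A2"
    and "\<sigma> \<ge> 1/2" and "\<tau> > 0"
    and scheme: "\<And>n. ((B + (\<sigma> * \<tau>) *\<^sub>R A1) ** matrix_inv B ** (B + (\<sigma> * \<tau>) *\<^sub>R A2))
                     *v ((1 / \<tau>) *\<^sub>R (y (Suc n) - y n)) + (A1 + A2) *v y n = phi n"
  shows "\<forall>n. dnorm (matrix_inv B) ((B + (\<sigma> * \<tau>) *\<^sub>R A2) *v y (Suc n))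
           \<le> dnorm (matrix_inv B) ((B + (\<sigma> * \<tau>) *\<^sub>R A2) *v y n) + \<tau> * dnorm (matrix_inv B) (phi n)"
proof
  fix n
  note Bpd = assms(1) and A1p = assms(2) and A2p = assms(3) and sig = assms(4) and tau = assms(5)
  define G where "G = matrix_inv B"
  define C where "C = \<sigma> * \<tau>"
  define P1 where "P1 = B + C *\<^sub>R A1"
  define P2 where "P2 = B + C *\<^sub>R A2"
  define v where "v = y n"
  define w where "w = y (Suc n)"
  define g where "g a b = (G *v a) \<bullet> b" for a b
  define lam where "lam = 1 / (2 * \<sigma>)"
  have Cpos: "C > 0" unfolding C_def using sig tau by simp
  have lam01: "0 < lam" "lam \<le> 1" unfolding lam_def using sig by auto
  have tlam: "2 * lam * C = \<tau>" unfolding lam_def C_def using sig by auto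
  have Gpd: "pos_def_mat G" unfolding G_def using inv_pd[OF Bpd] .
  have Gsym: "sym_mat G" using Gpd unfolding pos_def_mat_def by auto
  have Bsym: "sym_mat B" using Bpd unfolding pos_def_mat_def by auto
  have A1sym: "sym_mat A1" and A1n: "\<And>x. (A1 *v x) \<bullet> x \<ge> 0" using A1p unfolding pos_semidef_mat_def by auto
  have A2sym: "sym_mat A2" and A2n: "\<And>x. (A2 *v x) \<bullet> x \<ge> 0" using A2p unfolding pos_semidef_mat_def by auto
  have P1pd: "pos_def_mat P1" unfolding P1_def using pd_add[OF Bpd A1p] Cpos by simp
  have GB: "G *v (B *v x) = x" for x
    using pd_right_inv(2)[OF Bpd] unfolding G_def by (simp add: matrix_vector_mul_assoc)
  have BG: "B *v (G *v x) = x" for x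
    using pd_right_inv(1)[OF Bpd] unfolding G_def by (simp add: matrix_vector_mul_assoc)
  have gsym: "g a b = g b a" for a b unfolding g_def using sym_dot[OF Gsym, of a b] by (simp add: inner_commute)
  have gB: "g a (B *v b) = a \<bullet> b" for a b
    unfolding g_def using sym_dot[OF Bsym, of "G *v a" b] BG by simp
  have gB2: "g (B *v b) a = b \<bullet> a" for a b unfolding g_def GB ..
  have gnn: "g a a \<ge> 0" for a unfolding g_def using Gpd unfolding pos_def_mat_def
    by (metis inner_zero_left less_eq_real_def matrix_vector_mult_0_right)
  have gx: "g (a + c *\<^sub>R b) (a + c *\<^sub>R b) = g a a + 2 * c * g a b + c^2 * g b b" for a b c
    unfolding g_def using gexp[OF Gsym] .
  have dn: "dnorm G x = sqrt (g x x)" for x unfolding dnorm_def g_def ..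
  define d where "d = G *v (P2 *v (w - v))"
  have sch: "(1 / \<tau>) *\<^sub>R (P1 *v d) + (A1 + A2) *v v = phi n"
    using scheme[of n] unfolding d_def P1_def P2_def C_def G_def v_def w_def
    by (simp add: matrix_vector_mul_assoc[symmetric] matrix_vector_mult_scaleR)
  have Pd: "P1 *v d = \<tau> *\<^sub>R (phi n - (A1 + A2) *v v)"
  proof -
    have "(1 / \<tau>) *\<^sub>R (P1 *v d) = phi n - (A1 + A2) *v v" using sch by (simp add: algebra_simps)
    then have "\<tau> *\<^sub>R ((1 / \<tau>) *\<^sub>R (P1 *v d)) = \<tau> *\<^sub>R (phi n - (A1 + A2) *v v)" by simp
    then show ?thesis using tau by simp
  qed
  have Bd: "B *v d = P2 *v w - P2 *v v" unfolding d_def BG by (simp add: algebra_simps)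
  define z where "z = P2 *v v"
  define u where "u = z + (-2) *\<^sub>R (B *v v)"
  obtain \<beta> where beta: "P1 *v \<beta> = u" using pd_surj[OF P1pd] by blast
  define t where "t = u + (-2) *\<^sub>R (B *v \<beta>)"
  define qs where "qs = (- 2 * lam) *\<^sub>R (v + \<beta>)"
  have Pqs: "P1 *v qs = - \<tau> *\<^sub>R ((A1 + A2) *v v)"
  proof -
    have "P1 *v qs = (- 2 * lam) *\<^sub>R (P1 *v v + u)" unfolding qs_def
      by (simp only: matrix_vector_mult_scaleR matrix_vector_right_distrib beta)
    also have "P1 *v v + u = C *\<^sub>R ((A1 + A2) *v v)"
      proof -
      have e1: "P1 *v v = B *v v + C *\<^sub>R (A1 *v v)"
        unfolding P1_def by (simp add: matrix_vector_mult_add_rdistrib scaleR_matrix_vector_assoc[symmetric])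
      have e2: "z = B *v v + C *\<^sub>R (A2 *v v)"
        unfolding z_def P2_def by (simp add: matrix_vector_mult_add_rdistrib scaleR_matrix_vector_assoc[symmetric])
      have e3: "(a::real^'n) + c *\<^sub>R x + (a + c *\<^sub>R y + (-2) *\<^sub>R a) = c *\<^sub>R (x + y)" for a c x y
        by (simp add: vec_eq_iff algebra_simps)
      show ?thesis unfolding u_def e1 e2 e3 matrix_vector_mult_add_rdistrib ..
    qed
    finally show ?thesis using tlam by (simp add: algebra_simps)
  qed
  define qp where "qp = d - qs"
  have Pqp: "P1 *v qp = \<tau> *\<^sub>R phi n" unfolding qp_def matrix_vector_mult_diff_distrib Pd Pqs
    by (simp add: vec_eq_iff algebra_simps)
  define s where "s = z + B *v qs"
  have z': "P2 *v w = s + B *v qp" unfolding s_def qp_def z_def using Bd by (simp add: algebra_simps)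
  have guu: "g u u = g z z - 4 * C * ((A2 *v v) \<bullet> v)"
  proof -
    have "g u u = g z z - 4 * (z \<bullet> v) + 4 * ((B *v v) \<bullet> v)"
      unfolding u_def gx gB gB2 by (simp add: inner_commute)
    also have "z \<bullet> v = (B *v v) \<bullet> v + C * ((A2 *v v) \<bullet> v)"
      unfolding z_def P2_def by (simp add: algebra_simps scaleR_matrix_vector_assoc[symmetric] inner_add_left)
    finally show ?thesis by simp
  qed
  have gtt: "g t t = g u u - 4 * C * ((A1 *v \<beta>) \<bullet> \<beta>)"
  proof -
    have "g t t = g u u - 4 * (u \<bullet> \<beta>) + 4 * ((B *v \<beta>) \<bullet> \<beta>)"
      unfolding t_def gx gB gB2 by (simp add: inner_commute)
    also have "u \<bullet> \<beta> = (B *v \<beta>) \<bullet> \<beta> + C * ((A1 *v \<beta>) \<bullet> \<beta>)"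
      unfolding beta[symmetric] P1_def by (simp add: algebra_simps scaleR_matrix_vector_assoc[symmetric] inner_add_left)
    finally show ?thesis by simp
  qed
  have tz: "g t t \<le> g z z" using gtt guu A1n[of \<beta>] A2n[of v] Cpos
    by (smt (verit) mult_nonneg_nonneg)
  define e where "e = t - z"
  have se: "s = z + lam *\<^sub>R e"
    unfolding s_def e_def t_def u_def qs_def
    by (simp only: matrix_vector_mult_scaleR matrix_vector_right_distrib) (simp add: vec_eq_iff algebra_simps)
  have te: "t = z + 1 *\<^sub>R e" unfolding e_def by simp
  have gss: "g s s \<le> g z z"
  proof -
    have h1: "g t t = g z z + 2 * g z e + g e e" using gx[of z 1 e] te by simp
    have h2: "g s s = g z z + 2 * lam * g z e + lam^2 * g e e" using gx se by simp
    have "2 * g z e \<le> - g e e" using h1 tz by simp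
    then have "lam * (2 * g z e) \<le> lam * (- g e e)" using lam01 by (intro mult_left_mono) auto
    moreover have "lam^2 * g e e \<le> lam * g e e" using lam01 gnn[of e]
      by (intro mult_right_mono) (auto simp: power2_eq_square mult_le_cancel_left1)
    ultimately show ?thesis using h2 by simp
  qed
  have gqp: "g (B *v qp) (B *v qp) \<le> \<tau>^2 * g (phi n) (phi n)"
  proof -
    have "\<tau>^2 * g (phi n) (phi n) = g (P1 *v qp) (P1 *v qp)"
      using Pqp unfolding g_def by (simp add: power2_eq_square algebra_simps)
    also have "P1 *v qp = B *v qp + C *\<^sub>R (A1 *v qp)"
      unfolding P1_def by (simp add: algebra_simps scaleR_matrix_vector_assoc[symmetric])
    also have "g \<dots> \<dots> = g (B *v qp) (B *v qp) + 2 * C * ((A1 *v qp) \<bullet> qp) + C^2 * g (A1 *v qp) (A1 *v qp)"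
      unfolding gx gB2 by (simp add: inner_commute)
    finally show ?thesis using A1n[of qp] gnn[of "A1 *v qp"] Cpos
      by (smt (verit) mult_nonneg_nonneg zero_le_power2)
  qed
  have "dnorm G (P2 *v w) \<le> dnorm G s + dnorm G (B *v qp)"
    unfolding z' by (rule tri[OF Gpd])
  also have "dnorm G s \<le> dnorm G z" unfolding dn using gss by simp
  also have "dnorm G (B *v qp) \<le> \<tau> * dnorm G (phi n)"
  proof -
    have "sqrt (g (B *v qp) (B *v qp)) \<le> sqrt (\<tau>^2 * g (phi n) (phi n))"
      using gqp by simp
    also have "\<dots> = \<tau> * sqrt (g (phi n) (phi n))" using tau by (simp add: real_sqrt_mult)
    finally show ?thesis unfolding dn .
  qed
  finally show "dnorm (matrix_inv B) ((B + (\<sigma> * \<tau>) *\<^sub>R A2) *v y (Suc n))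
           \<le> dnorm (matrix_inv B) ((B + (\<sigma> * \<tau>) *\<^sub>R A2) *v y n) + \<tau> * dnorm (matrix_inv B) (phi n)"
    unfolding G_def P2_def C_def z_def v_def w_def by simp
qed

end
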